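(* Fix a predicate $P:\{-1,+1\}^k\to\{0,1\}$, $\varepsilon\ge0$ and $0\le\delta\le1$. Suppose $M$ is an $(\varepsilon,\delta)$-differentially private algorithm that maps CSP instances with respect to $P$ on $n$ variables to assignments in $\{\pm1\}^n$. Then there exists a CSP instance $\Phi$ with respect to $P$ such that $$\mathbb E[\mathrm{val}_\Phi(M(\Phi))]\ \le\ 1+\delta-e^{-\varepsilon}(1-\mu(P)).$$ In particular, when $\varepsilon\le1$ and $\delta=0$, $\mathbb E[\mathrm{val}_\Phi(M(\Phi))]\le\mu(P)+O(\varepsilon)$; and when $\varepsilon\gg1$ and $\delta=0$, $\mathbb E[\mathrm{val}_\Phi(M(\Phi))]\le1-e^{-\varepsilon}$ (up to the term $e^{-\varepsilon}\mu(P)$, i.e. $1-\Theta(e^{-\varepsilon})$).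
   Context: A CSP instance with respect to $P$ over variables $x_1,\dots,x_n$ is a multiset of $P$-constraints $(c,S)$, where $S\in[n]^k$ is the scope and $c\in\{-1,1\}^k$ is the negation pattern; $(c,S)$ is satisfied by $x$ iff $P(c_1x_{S_1},\dots,c_kx_{S_k})=1$. $\mathrm{val}_\Phi(x)$ is the fraction of constraints of $\Phi$ satisfied by $x$. $\mu(P)$ is the probability that $P$ is satisfied by a uniformly random input. Two instances are neighboring if one is obtained from the other by adding or removing one constraint; $M$ is $(\varepsilon,\delta)$-DP if $\Pr[M(\Phi)\in T]\le e^\varepsilon\Pr[M(\Phi')\in T]+\delta$ for all neighboring $\Phi,\Phi'$ and all output sets $T$. *)

theory Defs
  imports "HOL-Probability.Probability"
begin

definition pm1vecs :: "nat \<Rightarrow> int list set" where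
  "pm1vecs m = {y. length y = m \<and> set y \<subseteq> {-1, 1}}"

text \<open>A constraint (c,S): negation pattern c in {-1,1}^k and scope S in [n]^k
  (variables are indexed 0..n-1).\<close>
type_synonym constr = "int list \<times> nat list"

definition valid_constraint :: "nat \<Rightarrow> nat \<Rightarrow> constr \<Rightarrow> bool" where
  "valid_constraint k n C \<longleftrightarrow> fst C \<in> pm1vecs k \<and> length (snd C) = k \<and> set (snd C) \<subseteq> {0..<n}"

definition csp_instance :: "nat \<Rightarrow> nat \<Rightarrow> constr multiset \<Rightarrow> bool" where
  "csp_instance k n \<Phi> \<longleftrightarrow> (\<forall>C\<in>#\<Phi>. valid_constraint k n C)"

definition satisfies :: "(int list \<Rightarrow> bool) \<Rightarrow> int list \<Rightarrow> constr \<Rightarrow> bool" where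
  "satisfies P x C \<longleftrightarrow> P (map2 (*) (fst C) (map (\<lambda>i. x ! i) (snd C)))"

definition val :: "(int list \<Rightarrow> bool) \<Rightarrow> constr multiset \<Rightarrow> int list \<Rightarrow> real" where
  "val P \<Phi> x = real (size (filter_mset (satisfies P x) \<Phi>)) / real (size \<Phi>)"

definition mu :: "nat \<Rightarrow> (int list \<Rightarrow> bool) \<Rightarrow> real" where
  "mu k P = real (card {y \<in> pm1vecs k. P y}) / 2 ^ k"

definition neighboring :: "nat \<Rightarrow> nat \<Rightarrow> constr multiset \<Rightarrow> constr multiset \<Rightarrow> bool" where
  "neighboring k n \<Phi> \<Phi>' \<longleftrightarrow>
     (\<exists>C. valid_constraint k n C \<and> (\<Phi>' = add_mset C \<Phi> \<or> \<Phi> = add_mset C \<Phi>'))"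

definition diff_private ::
  "nat \<Rightarrow> nat \<Rightarrow> real \<Rightarrow> real \<Rightarrow> (constr multiset \<Rightarrow> 'b pmf) \<Rightarrow> bool" where
  "diff_private k n \<epsilon> \<delta> M \<longleftrightarrow>
     (\<forall>\<Phi> \<Phi>' T. csp_instance k n \<Phi> \<longrightarrow> csp_instance k n \<Phi>' \<longrightarrow> neighboring k n \<Phi> \<Phi>' \<longrightarrow>
        measure_pmf.prob (M \<Phi>) T \<le> exp \<epsilon> * measure_pmf.prob (M \<Phi>') T + \<delta>)"

end

theory Submission
  imports Defs
begin

lemma pm1vecs_finite: "finite (pm1vecs m)" and pm1vecs_card: "card (pm1vecs m) = 2 ^ m"
proof -
  have e: "pm1vecs m = {xs. set xs \<subseteq> {-1,1} \<and> length xs = m}"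
    unfolding pm1vecs_def by auto
  show "finite (pm1vecs m)" unfolding e by (rule finite_lists_length_eq) simp
  show "card (pm1vecs m) = 2 ^ m" unfolding e by (subst card_lists_length_eq) (auto simp: numeral_2_eq_2)
qed

lemma flip_card:
  assumes x0: "x0 \<in> {-1, 1::int}"
  shows "card {c \<in> pm1vecs k. P (map (\<lambda>a. a * x0) c)} = card {y \<in> pm1vecs k. P y}"
proof -
  let ?f = "map (\<lambda>a. a * x0)"
  have ff: "?f (?f c) = c" for c using x0 by (induct c) auto
  have fm: "c \<in> pm1vecs k \<Longrightarrow> ?f c \<in> pm1vecs k" for c
    using x0 unfolding pm1vecs_def by auto
  have inj: "inj_on ?f {c \<in> pm1vecs k. P (?f c)}"
    by (metis (no_types, lifting) ff inj_onI)
  have "?f ` {c \<in> pm1vecs k. P (?f c)} = {y \<in> pm1vecs k. P y}"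
  proof
    show "?f ` {c \<in> pm1vecs k. P (?f c)} \<subseteq> {y \<in> pm1vecs k. P y}" using fm by auto
    show "{y \<in> pm1vecs k. P y} \<subseteq> ?f ` {c \<in> pm1vecs k. P (?f c)}"
    proof
      fix y assume "y \<in> {y \<in> pm1vecs k. P y}"
      then show "y \<in> ?f ` {c \<in> pm1vecs k. P (?f c)}"
        using fm ff by (intro image_eqI[of _ _ "?f y"]) auto
    qed
  qed
  then show ?thesis using card_image[OF inj] by simp
qed

theorem theorem6p1:
  fixes k n :: nat and P :: "int list \<Rightarrow> bool" and \<epsilon> \<delta> :: real
    and M :: "constr multiset \<Rightarrow> int list pmf"
  assumes "n \<ge> 1"
    and "\<epsilon> \<ge> 0" and "0 \<le> \<delta>" and "\<delta> \<le> 1"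
    and "\<And>\<Phi>. csp_instance k n \<Phi> \<Longrightarrow> set_pmf (M \<Phi>) \<subseteq> pm1vecs n"
    and "diff_private k n \<epsilon> \<delta> M"
  shows "\<exists>\<Phi>. csp_instance k n \<Phi> \<and> \<Phi> \<noteq> {#} \<and>
           measure_pmf.expectation (M \<Phi>) (val P \<Phi>) \<le> 1 + \<delta> - exp (-\<epsilon>) * (1 - mu k P)"
proof -
  define S where "S = replicate k (0::nat)"
  define V where "V = pm1vecs k"
  define F where "F c = {x. \<not> satisfies P x (c, S)}" for c
  define M0 where "M0 = M {#}"
  have finV: "finite V" unfolding V_def by (rule pm1vecs_finite)
  have cardV: "card V = 2 ^ k" unfolding V_def by (rule pm1vecs_card)
  have valid: "c \<in> V \<Longrightarrow> valid_constraint k n (c, S)" for c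
    using assms(1) unfolding valid_constraint_def V_def S_def by auto
  have inst: "c \<in> V \<Longrightarrow> csp_instance k n {#(c, S)#}" for c
    using valid unfolding csp_instance_def by auto
  have inst0: "csp_instance k n {#}" unfolding csp_instance_def by auto
  have supp0: "set_pmf M0 \<subseteq> pm1vecs n" unfolding M0_def using assms(5)[OF inst0] .
  have fin0: "finite (set_pmf M0)" using supp0 pm1vecs_finite finite_subset by blast
  have cnt: "(\<Sum>c\<in>V. indicator (F c) x) = 2 ^ k - real (card {y \<in> pm1vecs k. P y})"
    if x: "x \<in> pm1vecs n" for x :: "int list"
  proof -
    have lx: "0 < length x" using x assms(1) unfolding pm1vecs_def by auto
    have "x ! 0 \<in> set x" using lx by (rule nth_mem)
    then have x0: "x ! 0 \<in> {-1, 1}" using x unfolding pm1vecs_def by auto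
    have eqs: "satisfies P x (c, S) \<longleftrightarrow> P (map (\<lambda>a. a * x ! 0) c)" if "c \<in> V" for c
    proof -
      have "length c = k" using that unfolding V_def pm1vecs_def by auto
      then have "map2 (*) c (map (\<lambda>i. x ! i) S) = map (\<lambda>a. a * x ! 0) c"
        unfolding S_def by (induct c arbitrary: k) auto
      then show ?thesis unfolding satisfies_def by simp
    qed
    have "(\<Sum>c\<in>V. indicator (F c) x) = (\<Sum>c\<in>V. (1::real) - of_bool (P (map (\<lambda>a. a * x ! 0) c)))"
      using eqs by (intro sum.cong) (auto simp: F_def indicator_def)
    also have "\<dots> = real (card V) - real (card {c \<in> V. P (map (\<lambda>a. a * x ! 0) c)})"
      proof -
      have "V \<inter> {c. P (map (\<lambda>a. a * x ! 0) c)} = {c \<in> V. P (map (\<lambda>a. a * x ! 0) c)}" by blast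
      then show ?thesis using finV by (simp add: sum_subtractf of_bool_def sum.If_cases)
    qed
    also have "\<dots> = 2 ^ k - real (card {y \<in> pm1vecs k. P y})"
      using flip_card[OF x0, of k P] cardV unfolding V_def by simp
    finally show ?thesis .
  qed
  have sumeq: "(\<Sum>c\<in>V. measure_pmf.prob M0 (F c)) = 2 ^ k * (1 - mu k P)"
  proof -
    have "(\<Sum>c\<in>V. measure_pmf.prob M0 (F c)) = (\<Sum>c\<in>V. measure_pmf.expectation M0 (indicator (F c)))"
      by simp
    also have "\<dots> = measure_pmf.expectation M0 (\<lambda>x. \<Sum>c\<in>V. indicator (F c) x)"
    proof -
      have "measure_pmf.expectation M0 (\<lambda>x. \<Sum>c\<in>V. indicator (F c) x :: real) =
          (\<Sum>c\<in>V. measure_pmf.expectation M0 (\<lambda>x. indicator (F c) x))"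
        by (rule Bochner_Integration.integral_sum) (rule integrable_measure_pmf_finite[OF fin0])
      then show ?thesis by simp
    qed
    also have "\<dots> = measure_pmf.expectation M0 (\<lambda>x. 2 ^ k - real (card {y \<in> pm1vecs k. P y}))"
      using supp0 cnt by (intro integral_cong_AE) (auto simp: AE_measure_pmf_iff)
    also have "\<dots> = 2 ^ k * (1 - mu k P)" unfolding mu_def by (simp add: field_simps)
    finally show ?thesis .
  qed
  have "\<exists>c\<in>V. measure_pmf.prob M0 (F c) \<ge> 1 - mu k P"
  proof (rule ccontr)
    assume "\<not> ?thesis"
    then have lt: "\<And>c. c \<in> V \<Longrightarrow> measure_pmf.prob M0 (F c) < 1 - mu k P" by force
    have "V \<noteq> {}" using cardV by auto
    then have "(\<Sum>c\<in>V. measure_pmf.prob M0 (F c)) < (\<Sum>c\<in>V. 1 - mu k P)"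
      using finV lt by (intro sum_strict_mono) auto
    then show False using sumeq cardV by simp
  qed
  then obtain c where cV: "c \<in> V" and cbig: "measure_pmf.prob M0 (F c) \<ge> 1 - mu k P" by blast
  define \<Phi> where "\<Phi> = {#(c, S)#}"
  have dp: "measure_pmf.prob M0 (F c) \<le> exp \<epsilon> * measure_pmf.prob (M \<Phi>) (F c) + \<delta>"
  proof -
    have "neighboring k n {#} \<Phi>" unfolding neighboring_def \<Phi>_def using valid[OF cV] by auto
    then show ?thesis using assms(6) inst[OF cV] inst0 unfolding diff_private_def M0_def \<Phi>_def
      by blast
  qed
  have ev: "measure_pmf.expectation (M \<Phi>) (val P \<Phi>) = 1 - measure_pmf.prob (M \<Phi>) (F c)"
  proof -
    have "val P \<Phi> = indicator (- F c)"
      by (rule ext) (simp add: val_def \<Phi>_def F_def indicator_def)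
    moreover have "measure_pmf.prob (M \<Phi>) (UNIV - F c) = 1 - measure_pmf.prob (M \<Phi>) (F c)"
      using measure_pmf.prob_compl[of "F c" "M \<Phi>"] by simp
    ultimately show ?thesis by (simp add: Compl_eq_Diff_UNIV)
  qed
  let ?q = "measure_pmf.prob (M \<Phi>) (F c)"
  have "exp (-\<epsilon>) * (1 - mu k P) \<le> exp (-\<epsilon>) * (exp \<epsilon> * ?q + \<delta>)"
    using cbig dp by (intro mult_left_mono) auto
  also have "\<dots> = ?q + exp (-\<epsilon>) * \<delta>" by (simp add: algebra_simps exp_minus field_simps)
  also have "\<dots> \<le> ?q + \<delta>"
    using assms(2,3) by (intro add_left_mono) (simp add: mult_left_le_one_le)
  finally have "exp (-\<epsilon>) * (1 - mu k P) \<le> ?q + \<delta>" .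
  then show ?thesis using inst[OF cV] ev unfolding \<Phi>_def by (intro exI[of _ \<Phi>]) (auto simp: \<Phi>_def)
qed

end
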